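(* Let $\mathbb{F}_q$ be a finite field and $\mathcal{M}=\mathbb{F}_q\times\mathbb{F}_q^{*}\times\mathbb{F}_q$. For $(x,y,z)\in\mathcal{M}$ let $C(x,y,z)=\{(x_1,y_1,z_1)\in\mathcal{M}: x_1y-y_1x=z_1-z\}$. Then $\mathcal{M}=\bigsqcup_{m\in\mathbb{F}_q}C(m,1,0)$ is a disjoint union, and each $C(m,1,0)$ has cardinality $q(q-1)$.
   Context: $C(x,y,z)$ is the centralizer of $(x,y,z)$ for the commuting relation on $\mathcal{M}$ given by: $(x_1,y_1,z_1)$ and $(x_2,y_2,z_2)$ commute iff $x_1y_2-y_1x_2=z_1-z_2$. *)

theory Defs
  imports Main
begin

definition Mset :: "('a::{field,finite} \<times> 'a \<times> 'a) set" where
  "Mset = {(x, y, z). y \<noteq> 0}"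

definition centr :: "'a::{field,finite} \<Rightarrow> 'a \<Rightarrow> 'a \<Rightarrow> ('a \<times> 'a \<times> 'a) set" where
  "centr x y z = {(x1, y1, z1). (x1, y1, z1) \<in> Mset \<and> x1 * y - y1 * x = z1 - z}"

end

theory Submission
  imports Defs
begin

lemma centr_eq: "centr m 1 0 = (\<lambda>(y,z). (z + y*m, y, z)) ` ({y::'a::{field,finite}. y\<noteq>0} \<times> UNIV)"
proof (rule set_eqI)
  fix p :: "'a \<times> 'a \<times> 'a"
  obtain a b c where p: "p = (a,b,c)" by (cases p) auto
  show "p \<in> centr m 1 0 \<longleftrightarrow> p \<in> (\<lambda>(y,z). (z + y*m, y, z)) ` ({y. y\<noteq>0} \<times> UNIV)"
    unfolding p centr_def Mset_def
    by (auto simp: image_iff algebra_simps)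
qed

lemma card_nz: "card {y::'a::{field,finite}. y \<noteq> 0} = card (UNIV::'a set) - 1"
proof -
  have "{y::'a. y \<noteq> 0} = UNIV - {0}" by auto
  thus ?thesis by (simp add: card_Diff_subset)
qed

theorem lemma6p1:
  shows "(Mset :: ('a::{field,finite} \<times> 'a \<times> 'a) set) = (\<Union>m::'a. centr m 1 0)
    \<and> (\<forall>m m' :: 'a. m \<noteq> m' \<longrightarrow> centr m 1 0 \<inter> centr m' 1 0 = {})
    \<and> (\<forall>m::'a. card (centr m 1 0) = card (UNIV :: 'a set) * (card (UNIV :: 'a set) - 1))"
proof (intro conjI allI impI)
  show "(Mset :: ('a::{field,finite} \<times> 'a \<times> 'a) set) = (\<Union>m::'a. centr m 1 0)"
  proof (rule set_eqI)
    fix p :: "'a \<times> 'a \<times> 'a"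
    obtain a b c where p: "p = (a,b,c)" by (cases p) auto
    show "p \<in> Mset \<longleftrightarrow> p \<in> (\<Union>m. centr m 1 0)"
    proof
      assume "p \<in> Mset"
      hence b: "b \<noteq> 0" using p by (simp add: Mset_def)
      have "p \<in> centr ((a - c)/b) 1 0" using b p by (simp add: centr_def Mset_def field_simps)
      thus "p \<in> (\<Union>m. centr m 1 0)" by blast
    qed (auto simp: centr_def)
  qed
next
  fix m m' :: 'a assume "m \<noteq> m'"
  thus "centr m 1 0 \<inter> centr m' 1 0 = {}"
    by (auto simp: centr_def Mset_def)
next
  fix m :: 'a
  have inj: "inj_on (\<lambda>(y,z). (z + y*m, y, z)) ({y::'a. y\<noteq>0} \<times> UNIV)"
    by (auto simp: inj_on_def)
  have "card (centr m 1 0) = card ({y::'a. y\<noteq>0} \<times> (UNIV::'a set))"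
    unfolding centr_eq by (rule card_image[OF inj])
  also have "\<dots> = (card (UNIV :: 'a set) - 1) * card (UNIV :: 'a set)"
    by (simp add: card_cartesian_product card_nz)
  finally show "card (centr m 1 0) = card (UNIV :: 'a set) * (card (UNIV :: 'a set) - 1)"
    by simp
qed

end
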